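(* Let $n \ge 1$ be an integer and let $A_n \in \{0,1\}^{[2]^n \times [2]^n}$ be the binary single-grain-error channel: for $x,y \in [2]^n$ (indexed $x = x_0x_1\cdots x_{n-1}$), $(A_n)_{x,y}=1$ if and only if either $y = x$, or there exists $j \in \{0,\dots,n-2\}$ such that $y_j = x_{j+1}$ and $y_i = x_i$ for all $i \ne j$. For $y \in [2]^n$ let $r_y$ be the number of runs of $y$, $u_y$ the number of runs of length one, $b^L_y \in \{0,1\}$ the indicator that the first run of $y$ has length one, and $b^R_y \in\{0,1\}$ the indicator that the last run of $y$ has length one. Then the vector $z \in \mathbb{R}^{[2]^n}$ with \[ z_y = \frac{1}{r_y}\left(1 + \frac{2u_y - 2b^R_y - b^L_y - 2}{(r_y+2)(r_y+1)}\right)^{-1} \] is feasible for $\kappa^*(A_n)$, i.e. $z \ge \mathbf{0}$ and $A_n z \ge \mathbf{1}$ entrywise.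
   Context: $[2]=\{0,1\}$; a run of a string is a maximal block of consecutive equal symbols. For $A \in \{0,1\}^{X\times Y}$, $\kappa^*(A) = \min\{\mathbf{1}^T z : z\in\mathbb{R}^Y,\ z \ge \mathbf{0},\ Az \ge \mathbf{1}\}$ (entrywise inequalities). *)

theory Defs
  imports Main "HOL.Real"
begin

text \<open>Strings over [2] = {0,1} are boolean lists; [2]^n = lists of length n.\<close>

definition strings :: "nat \<Rightarrow> bool list set" where
  "strings n = {xs. length xs = n}"

fun runs :: "'a list \<Rightarrow> 'a list list" where
  "runs [] = []"
| "runs (x # xs) =
     (case runs xs of
        [] \<Rightarrow> [[x]]
      | r # rs \<Rightarrow> (if hd r = x then (x # r) # rs else [x] # r # rs))"

definition num_runs :: "'a list \<Rightarrow> nat" where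
  "num_runs y = length (runs y)"

definition num_unit_runs :: "'a list \<Rightarrow> nat" where
  "num_unit_runs y = length (filter (\<lambda>r. length r = 1) (runs y))"

definition bL :: "'a list \<Rightarrow> nat" where
  "bL y = (if runs y \<noteq> [] \<and> length (hd (runs y)) = 1 then 1 else 0)"

definition bR :: "'a list \<Rightarrow> nat" where
  "bR y = (if runs y \<noteq> [] \<and> length (last (runs y)) = 1 then 1 else 0)"

definition sge_channel :: "nat \<Rightarrow> bool list \<Rightarrow> bool list \<Rightarrow> bool" where
  "sge_channel n x y \<longleftrightarrow>
     y = x \<or> (\<exists>j. j \<le> n - 2 \<and> j + 1 < n \<and> y ! j = x ! (j + 1) \<and>
                 (\<forall>i<n. i \<noteq> j \<longrightarrow> y ! i = x ! i))"

definition kappa_star_feasible ::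
  "'x set \<Rightarrow> 'y set \<Rightarrow> ('x \<Rightarrow> 'y \<Rightarrow> bool) \<Rightarrow> ('y \<Rightarrow> real) \<Rightarrow> bool" where
  "kappa_star_feasible X Y A z \<longleftrightarrow>
     (\<forall>y\<in>Y. z y \<ge> 0) \<and> (\<forall>x\<in>X. (\<Sum>y\<in>Y. of_bool (A x y) * z y) \<ge> 1)"

definition z_sge :: "bool list \<Rightarrow> real" where
  "z_sge y = (1 / real (num_runs y)) *
     inverse (1 + (2 * real (num_unit_runs y) - 2 * real (bR y) - real (bL y) - 2)
                  / ((real (num_runs y) + 2) * (real (num_runs y) + 1)))"

end

theory Submission
  imports Defs
begin


definition bd :: "'a list \<Rightarrow> nat \<Rightarrow> bool" where "bd y j \<longleftrightarrow> y!j \<noteq> y!Suc j"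

definition nr :: "'a list \<Rightarrow> nat" where
  "nr y = 1 + (\<Sum>j<length y - 1. of_bool (bd y j))"

definition unitp :: "'a list \<Rightarrow> nat \<Rightarrow> bool" where
  "unitp y p \<longleftrightarrow> (p = 0 \<or> bd y (p - 1)) \<and> (Suc p = length y \<or> bd y p)"

definition nu :: "'a list \<Rightarrow> nat" where
  "nu y = (\<Sum>p<length y. of_bool (unitp y p))"

lemma bd_CC_Suc[simp]: "bd (x#ys) (Suc j) = bd ys j"
  by (simp add: bd_def)

lemma bd_CC_0[simp]: "bd (x#y#ys) 0 = (x \<noteq> y)"
  by (simp add: bd_def)

lemma runs_Cons_hd: "\<exists>r rs. runs (y#ys) = (y#r)#rs"
  by (cases "runs ys") auto

lemma runs_CC: "runs (x#y#ys) = (if x = y then (x # hd (runs (y#ys))) # tl (runs (y#ys)) else [x] # runs (y#ys))"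
proof -
  obtain r rs where h: "runs (y#ys) = (y#r)#rs" using runs_Cons_hd[of y ys] by blast
  show ?thesis by (simp only: runs.simps(2)[of x "y#ys"] h) auto
qed

lemma runs_single[simp]: "runs [y] = [[y]]" by simp

declare runs.simps(2)[simp del]

lemma runs_ne: "runs (y#ys) \<noteq> []"
  using runs_Cons_hd[of y ys] by auto

lemma num_runs_idx: "y \<noteq> [] \<Longrightarrow> num_runs y = nr y"
proof (induction y)
  case Nil then show ?case by simp
next
  case (Cons x ys)
  show ?case
  proof (cases ys)
    case Nil then show ?thesis by (simp add: num_runs_def nr_def)
  next
    case (Cons y ys')
    have IH: "num_runs (y#ys') = nr (y#ys')" using Cons.IH Cons by simp
    have "num_runs (x#y#ys') = num_runs (y#ys') + of_bool (x \<noteq> y)"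
      using runs_ne[of y ys'] unfolding num_runs_def by (auto simp: runs_CC)
    moreover have "nr (x#y#ys') = nr (y#ys') + of_bool (x \<noteq> y)"
    proof -
      have l: "length (x#y#ys') - 1 = Suc (length (y#ys') - 1)" by simp
      show ?thesis unfolding nr_def l sum.lessThan_Suc_shift bd_CC_Suc bd_CC_0 by simp
    qed
    ultimately show ?thesis using IH Cons by simp
  qed
qed

lemma hd_runs_len1: "length (hd (runs (y#ys))) = 1 \<longleftrightarrow> ys = [] \<or> hd ys \<noteq> y"
proof (cases ys)
  case Nil then show ?thesis by simp
next
  case (Cons z zs)
  obtain r rs where h: "runs (z#zs) = (z#r)#rs" using runs_Cons_hd[of z zs] by blast
  show ?thesis using Cons by (simp add: h runs_CC)
qed

lemma bL_idx: assumes "y \<noteq> []" shows "bL y = of_bool (unitp y 0)"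
proof (cases y)
  case Nil then show ?thesis using assms by simp
next
  case (Cons a ys)
  show ?thesis using Cons runs_ne[of a ys] hd_runs_len1[of a ys]
    by (cases ys) (auto simp: bL_def unitp_def bd_def)
qed

lemma unitp_Cons_SS[simp]: "unitp (x#ys) (Suc (Suc p)) = unitp ys (Suc p)"
  by (simp add: unitp_def)

lemma num_unit_runs_step:
  "num_unit_runs (x#y#ys) + of_bool (x = y \<and> (ys = [] \<or> hd ys \<noteq> y)) = num_unit_runs (y#ys) + of_bool (x \<noteq> y)"
proof -
  obtain h t where h: "runs (y#ys) = h#t" using runs_ne[of y ys] by (cases "runs (y#ys)") auto
  have hl: "length h = 1 \<longleftrightarrow> ys = [] \<or> hd ys \<noteq> y" using hd_runs_len1[of y ys] h by simp
  show ?thesis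
  proof (cases "x = y")
    case True
    have "length (x#h) \<noteq> 1" using h runs_Cons_hd[of y ys] by auto
    then show ?thesis using True hl unfolding num_unit_runs_def by (simp add: runs_CC h)
  next
    case False
    then show ?thesis unfolding num_unit_runs_def by (simp add: runs_CC h)
  qed
qed

lemma nu_step:
  "nu (x#y#ys) + of_bool (x = y \<and> (ys = [] \<or> hd ys \<noteq> y)) = nu (y#ys) + of_bool (x \<noteq> y)"
proof -
  define m where "m = length ys"
  have l1: "length (x#y#ys) = Suc (Suc m)" and l2: "length (y#ys) = Suc m" by (simp_all add: m_def)
  have u0: "unitp (x#y#ys) 0 = (x \<noteq> y)" by (simp add: unitp_def)
  have u1: "unitp (x#y#ys) (Suc 0) = (x \<noteq> y \<and> (ys = [] \<or> y \<noteq> hd ys))"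
    by (cases ys) (auto simp: unitp_def bd_def)
  have u0': "unitp (y#ys) 0 = (ys = [] \<or> y \<noteq> hd ys)"
    by (cases ys) (auto simp: unitp_def bd_def)
  have A: "nu (x#y#ys) = of_bool (x \<noteq> y) + of_bool (x \<noteq> y \<and> (ys = [] \<or> y \<noteq> hd ys)) + (\<Sum>p<m. of_bool (unitp (y#ys) (Suc p)))"
    unfolding nu_def l1 sum.lessThan_Suc_shift u0 u1 unitp_Cons_SS by simp
  have B: "nu (y#ys) = of_bool (ys = [] \<or> y \<noteq> hd ys) + (\<Sum>p<m. of_bool (unitp (y#ys) (Suc p)))"
    unfolding nu_def l2 sum.lessThan_Suc_shift u0' by simp
  show ?thesis unfolding A B by auto
qed

lemma num_unit_runs_idx: "y \<noteq> [] \<Longrightarrow> num_unit_runs y = nu y"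
proof (induction y)
  case Nil then show ?case by simp
next
  case (Cons x ys)
  show ?case
  proof (cases ys)
    case Nil then show ?thesis by (simp add: num_unit_runs_def nu_def unitp_def)
  next
    case (Cons y ys')
    have IH: "num_unit_runs (y#ys') = nu (y#ys')" using Cons.IH Cons by simp
    show ?thesis using num_unit_runs_step[of x y ys'] nu_step[of x y ys'] IH Cons by simp
  qed
qed

lemma nr_one: assumes "nr (y#ys) = 1" "j < length ys" shows "\<not> bd (y#ys) j"
proof -
  have "(\<Sum>j<length ys. of_bool (bd (y#ys) j)::nat) = 0" using assms(1) by (simp add: nr_def)
  then show ?thesis using assms(2) by auto
qed

lemma last_runs_len1: "xs \<noteq> [] \<Longrightarrow> length (last (runs xs)) = 1 \<longleftrightarrow> unitp xs (length xs - 1)"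
proof (induction xs)
  case Nil then show ?case by simp
next
  case (Cons x ys)
  show ?case
  proof (cases ys)
    case Nil then show ?thesis by (simp add: unitp_def)
  next
    case (Cons y ys')
    have IH: "length (last (runs (y#ys'))) = 1 \<longleftrightarrow> unitp (y#ys') (length ys')" using Cons.IH Cons by simp
    obtain h t where h: "runs (y#ys') = h#t" using runs_ne[of y ys'] by (cases "runs (y#ys')") auto
    have hl: "length h = 1 \<longleftrightarrow> ys' = [] \<or> hd ys' \<noteq> y" using hd_runs_len1[of y ys'] h by simp
    show ?thesis
    proof (cases t)
      case Nil
      have nr1: "nr (y#ys') = 1" using num_runs_idx[of "y#ys'"] h Nil by (simp add: num_runs_def)
      show ?thesis
      proof (cases ys')
        case Nil
        then show ?thesis using Cons h by (auto simp: runs_CC unitp_def)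
      next
        case (Cons w ws)
        have "\<not> bd (y#ys') 0" using nr_one[OF nr1, of 0] Cons by simp
        then have wy: "w = y" using Cons by (simp add: bd_def)
        have "\<not> bd (y#ys') (length ys' - 1)" using nr_one[OF nr1, of "length ys' - 1"] Cons by simp
        then have nu: "\<not> unitp (x#y#ys') (Suc (length ys'))" using Cons by (simp add: unitp_def)
        show ?thesis using Cons \<open>ys = y#ys'\<close> h Nil hl wy nu by (auto simp: runs_CC)
      qed
    next
      case (Cons t1 ts)
      have "ys' \<noteq> []" using h Cons by auto
      then have "unitp (x#y#ys') (Suc (length ys')) = unitp (y#ys') (length ys')"
        by (cases ys') auto
      then show ?thesis using IH \<open>ys = y#ys'\<close> h Cons by (auto simp: runs_CC)
    qed
  qed
qed

lemma bR_idx: assumes "y \<noteq> []" shows "bR y = of_bool (unitp y (length y - 1))"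
  using assms last_runs_len1[OF assms] runs_ne[of "hd y" "tl y"] by (auto simp: bR_def)



lemma final_ineq:
  fixes a c e R N :: real
  assumes a: "a \<ge> 0" and c: "c \<ge> 0" and e0: "e \<ge> 0" and e1: "e \<le> 1"
    and R: "R = 1 + a + c + e" and cR: "c > 0 \<Longrightarrow> R \<ge> 3" and N: "N = e + 2*c - 2"
  shows "1 \<le> (1/R - N/(R*(R+1)*(R+2))) + a*(1/R - (N+2)/(R*(R+1)*(R+2)))
            + c*(1/(R-2) - (N-2)/((R-2)*(R-1)*R)) + e*(1/(R-1) - (N-1)/((R-1)*R*(R+1)))"
proof (cases "c > 0")
  case True
  have R3: "R \<ge> 3" using cR True by simp
  define iX where "iX = 1/(R*(R-1)*(R-2))"
  define iY where "iY = 1/(R*(R-1)*(R+1))"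
  define iZ where "iZ = 1/(R*(R+1)*(R+2))"
  have pos: "R > 0" "R - 1 > 0" "R - 2 > 0" using R3 by auto
  have id: "(1/R - N/(R*(R+1)*(R+2))) + a*(1/R - (N+2)/(R*(R+1)*(R+2)))
            + c*(1/(R-2) - (N-2)/((R-2)*(R-1)*R)) + e*(1/(R-1) - (N-1)/((R-1)*R*(R+1)))
         = 1 + c*(4+2*a+e)*iX + e*(5+a-c)*iY - ((1+a)*(e+2*c)-2)*iZ"
  proof -
    have a_eq: "a = R - 1 - c - e" using R by simp
    have nz: "R \<noteq> 0" "R - 1 \<noteq> 0" "R - 2 \<noteq> 0" "R + 1 \<noteq> 0" "R + 2 \<noteq> 0" using pos by auto
    show ?thesis unfolding iX_def iY_def iZ_def N a_eq using nz
      apply (simp add: divide_simps)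
      apply (simp add: algebra_simps)
      done
  qed
  have iXp: "iX > 0" and iYp: "iY > 0" and iZp: "iZ > 0" unfolding iX_def iY_def iZ_def using pos by auto
  have ZX: "iZ \<le> iX" unfolding iX_def iZ_def using pos
    by (intro divide_left_mono mult_mono) (auto intro!: mult_pos_pos mult_mono)
  have YX: "iY \<le> iX" unfolding iX_def iY_def using pos
    by (intro divide_left_mono mult_mono) (auto intro!: mult_pos_pos mult_mono)
  have ZY: "iZ \<le> iY" unfolding iY_def iZ_def using pos
    by (intro divide_left_mono mult_mono) (auto intro!: mult_pos_pos mult_mono)
  have i1: "(c*(2+2*a))*iZ \<le> (c*(2+2*a))*iX" using ZX a c by (intro mult_left_mono) auto
  have i2a: "(c*e)*iY \<le> (c*e)*iX" using YX e0 c by (intro mult_left_mono) auto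
  have i2b: "(c*e)*iX \<le> (c*(2+e))*iX" using iXp e0 c by (intro mult_right_mono mult_left_mono) auto
  have i3a: "(e*(1+a))*iZ \<le> (e*(1+a))*iY" using ZY e0 a by (intro mult_left_mono) auto
  have i3b: "(e*(1+a))*iY \<le> (e*(5+a))*iY" using iYp e0 a by (intro mult_right_mono mult_left_mono) auto
  have "0 \<le> c*(4+2*a+e)*iX + e*(5+a-c)*iY - ((1+a)*(e+2*c)-2)*iZ"
    using i1 i2a i2b i3a i3b iZp by (simp add: algebra_simps)
  then show ?thesis using id by simp
next
  case False
  then have c0: "c = 0" using c by simp
  show ?thesis
  proof (cases "a + e > 0")
    case True
    have pos: "R > 0" "R - 1 > 0" using True R c0 a e0 by auto
    define iY where "iY = 1/(R*(R-1)*(R+1))"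
    define iZ where "iZ = 1/(R*(R+1)*(R+2))"
    have id: "(1/R - N/(R*(R+1)*(R+2))) + a*(1/R - (N+2)/(R*(R+1)*(R+2)))
            + c*(1/(R-2) - (N-2)/((R-2)*(R-1)*R)) + e*(1/(R-1) - (N-1)/((R-1)*R*(R+1)))
         = 1 + e*(5+a)*iY - ((1+a)*e-2)*iZ"
    proof -
      have a_eq: "a = R - 1 - e" using R c0 by simp
      have nz: "R \<noteq> 0" "R - 1 \<noteq> 0" "R + 1 \<noteq> 0" "R + 2 \<noteq> 0" using pos by auto
      show ?thesis unfolding iY_def iZ_def N a_eq c0 using nz
        apply (simp add: divide_simps)
        apply (simp add: algebra_simps)
        done
    qed
    have iYp: "iY > 0" and iZp: "iZ > 0" unfolding iY_def iZ_def using pos by auto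
    have ZY: "iZ \<le> iY" unfolding iY_def iZ_def using pos
      by (intro divide_left_mono mult_mono) (auto intro!: mult_pos_pos mult_mono)
    have i3a: "(e*(1+a))*iZ \<le> (e*(1+a))*iY" using ZY e0 a by (intro mult_left_mono) auto
    have i3b: "(e*(1+a))*iY \<le> (e*(5+a))*iY" using iYp e0 a by (intro mult_right_mono mult_left_mono) auto
    have "0 \<le> e*(5+a)*iY - ((1+a)*e-2)*iZ"
      using i3a i3b iZp by (simp add: algebra_simps)
    then show ?thesis using id by simp
  next
    case False
    then have "a = 0" "e = 0" using a e0 by auto
    then show ?thesis using c0 R N by simp
  qed
qed



definition Nv :: "bool list \<Rightarrow> real" where
  "Nv y = 2 * real (num_unit_runs y) - 2 * real (bR y) - real (bL y) - 2"

definition wv :: "bool list \<Rightarrow> nat \<Rightarrow> real" where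
  "wv y p = (if unitp y p then 2 - 2 * of_bool (Suc p = length y) - of_bool (p = 0) else 0)"

definition Wsum :: "bool list \<Rightarrow> real" where
  "Wsum y = (\<Sum>p<length y. wv y p)"

lemma Nv_W: assumes "y \<noteq> []" shows "Nv y = Wsum y - 2"
proof -
  let ?n = "length y"
  have n: "?n = Suc (?n - 1)" using assms by simp
  have "Wsum y = (\<Sum>p<?n. 2 * of_bool (unitp y p) - 2 * (if p = ?n - 1 then of_bool (unitp y p) else 0)
                     - (if p = 0 then of_bool (unitp y p) else 0))"
    unfolding Wsum_def wv_def by (rule sum.cong) auto
  also have "\<dots> = 2 * (\<Sum>p<?n. of_bool (unitp y p)) - 2 * of_bool (unitp y (?n - 1)) - of_bool (unitp y 0)"
    using assms by (simp add: sum_subtractf sum_distrib_left[symmetric])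
  also have "\<dots> = 2 * real (nu y) - 2 * real (bR y) - real (bL y)"
    using bR_idx[OF assms] bL_idx[OF assms] by (simp add: nu_def)
  finally show ?thesis unfolding Nv_def num_unit_runs_idx[OF assms] by simp
qed

lemma wv_ge: "length y \<ge> 2 \<Longrightarrow> wv y p \<ge> 0"
  unfolding wv_def by auto

lemma wv_le: "wv y p \<le> 2"
  unfolding wv_def by auto

lemma wv_ge1: "wv y p \<ge> - of_bool (p = 0)"
  unfolding wv_def by auto

lemma Wsum_ge: assumes "y \<noteq> []" shows "Wsum y \<ge> -1"
proof -
  have "Wsum y \<ge> (\<Sum>p<length y. - (if p = 0 then 1 else 0))"
    unfolding Wsum_def
  proof (rule sum_mono)
    fix p show "- (if p = 0 then 1 else 0) \<le> wv y p" using wv_ge1[of p y] by auto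
  qed
  also have "(\<Sum>p<length y. - (if p = 0 then 1 else 0)) = (-1::real)"
    using assms by (simp add: sum_negf)
  finally show ?thesis .
qed

definition P :: "real \<Rightarrow> real" where "P r = r * (r+1) * (r+2)"

lemma z_lb:
  assumes "y \<noteq> []"
  shows "z_sge y \<ge> 1 / real (num_runs y) - Nv y / P (real (num_runs y))"
    and "z_sge y \<ge> 0" and "real (num_runs y) \<ge> 1"
proof -
  define R where "R = real (num_runs y)"
  have R1: "R \<ge> 1" unfolding R_def num_runs_idx[OF assms] nr_def by simp
  define D where "D = (R+2)*(R+1)"
  have D6: "D \<ge> 6"
  proof -
    have "(3::real)*2 \<le> (R+2)*(R+1)" using R1 by (intro mult_mono) auto
    then show ?thesis by (simp add: D_def)
  qed
  have N3: "Nv y \<ge> -3" using Nv_W[OF assms] Wsum_ge[OF assms] by simp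
  define t where "t = Nv y / D"
  have t: "t \<ge> -1/2" unfolding t_def using D6 N3 by (simp add: field_simps)
  have z: "z_sge y = (1/R) * inverse (1 + t)"
    unfolding z_sge_def R_def t_def D_def Nv_def by simp
  have inv: "inverse (1 + t) \<ge> 1 - t"
  proof -
    have "(1 - t) * (1 + t) \<le> 1" by (simp add: algebra_simps)
    then show ?thesis using t by (simp add: field_simps)
  qed
  have "z_sge y \<ge> (1/R) * (1 - t)" unfolding z using inv R1 by (intro mult_left_mono) auto
  also have "(1/R) * (1 - t) = 1/R - Nv y / P R"
  proof -
    have nz: "R \<noteq> 0" "R+1 \<noteq> 0" "R+2 \<noteq> 0" using R1 by auto
    show ?thesis unfolding t_def P_def D_def using nz
      by (simp add: divide_simps)
  qed
  finally show "z_sge y \<ge> 1 / real (num_runs y) - Nv y / P (real (num_runs y))" unfolding R_def .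
  show "z_sge y \<ge> 0" unfolding z using t R1 by simp
  show "real (num_runs y) \<ge> 1" using R1 R_def by simp
qed



definition flip :: "bool list \<Rightarrow> nat \<Rightarrow> bool list" where
  "flip x j = x[j := x ! Suc j]"

lemma fl_len[simp]: "length (flip x j) = length x"
  by (simp add: flip_def)

lemma fl_bd:
  assumes "Suc j < length x" "bd x j" "Suc i < length x"
  shows "bd (flip x j) i = (if i = j then False else if Suc i = j then \<not> bd x i else bd x i)"
  using assms unfolding bd_def flip_def by (auto simp: nth_list_update)

lemma nr_real: "y \<noteq> [] \<Longrightarrow> real (nr y) = 1 + (\<Sum>i<length y - 1. of_bool (bd y i))"
  unfolding nr_def by simp

lemma unit_imp:
  assumes "length y = length x" "p < length x"
    "p \<noteq> 0 \<Longrightarrow> bd y (p-1) \<Longrightarrow> bd x (p-1)"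
    "Suc p < length x \<Longrightarrow> bd y p \<Longrightarrow> bd x p"
    "unitp y p"
  shows "unitp x p"
proof -
  have a: "p = 0 \<or> bd x (p-1)" using assms(3,5) unfolding unitp_def by auto
  have b: "Suc p = length x \<or> bd x p"
  proof (cases "Suc p = length x")
    case False
    then have "Suc p < length x" using assms(2) by simp
    then show ?thesis using assms(1,4,5) unfolding unitp_def by auto
  qed simp
  show ?thesis using a b unfolding unitp_def by simp
qed

lemma wv_mono:
  assumes "length y = length x" "length x \<ge> 2" "unitp y p \<Longrightarrow> unitp x p"
  shows "wv y p \<le> wv x p"
  using assms wv_ge[of x p] unfolding wv_def by auto

lemma not_unit_j:
  assumes "Suc j < length x" "bd x j"
  shows "\<not> unitp (flip x j) j"
  using assms fl_bd[OF assms, of j] unfolding unitp_def by auto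

lemma first_nr:
  assumes "Suc 0 < length x" "bd x 0"
  shows "real (nr (flip x 0)) = real (nr x) - 1"
proof -
  let ?n = "length x"
  have "(\<Sum>i<?n - 1. of_bool (bd (flip x 0) i)::real) = (\<Sum>i<?n - 1. of_bool (bd x i) - (if i = 0 then 1 else 0))"
    by (rule sum.cong) (use assms fl_bd[OF assms] in auto)
  also have "\<dots> = (\<Sum>i<?n - 1. of_bool (bd x i)) - 1"
    using assms by (simp add: sum_subtractf)
  finally have S: "(\<Sum>i<length x - 1. of_bool (bd (flip x 0) i)::real) = \<dots>" .
  have ne: "flip x 0 \<noteq> []" "x \<noteq> []" using assms by (auto simp: flip_def)
  show ?thesis using S nr_real[OF ne(1), unfolded fl_len] nr_real[OF ne(2)] by linarith
qed

lemma first_W: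
  assumes "Suc 0 < length x" "bd x 0"
  shows "Wsum (flip x 0) \<le> Wsum x - 1"
proof -
  let ?n = "length x"
  have "Wsum (flip x 0) \<le> (\<Sum>p<?n. wv x p - (if p = 0 then 1 else 0))"
    unfolding Wsum_def fl_len
  proof (rule sum_mono)
    fix p assume p: "p \<in> {..<?n}"
    show "wv (flip x 0) p \<le> wv x p - (if p = 0 then 1 else 0)"
    proof (cases "p = 0")
      case True
      have "\<not> unitp (flip x 0) 0" using not_unit_j[OF assms] .
      moreover have "unitp x 0" using assms by (simp add: unitp_def)
      ultimately show ?thesis using True assms by (simp add: wv_def)
    next
      case False
      have "unitp (flip x 0) p \<Longrightarrow> unitp x p"
        by (rule unit_imp[of "flip x 0"]) (use p assms fl_bd[OF assms] in \<open>auto split: if_splits\<close>)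
      then show ?thesis using False wv_mono[of "flip x 0" x p] assms by simp
    qed
  qed
  also have "\<dots> = Wsum x - 1" using assms by (auto simp add: sum_subtractf Wsum_def)
  finally show ?thesis .
qed

lemma merge_nr:
  assumes "Suc j < length x" "bd x j" "j \<noteq> 0" "bd x (j-1)"
  shows "real (nr (flip x j)) = real (nr x) - 2"
proof -
  let ?n = "length x"
  have "(\<Sum>i<?n - 1. of_bool (bd (flip x j) i)::real) = (\<Sum>i<?n - 1. of_bool (bd x i) - (if i = j then 1 else 0) - (if i = j - 1 then 1 else 0))"
    by (rule sum.cong) (use assms fl_bd[OF assms(1,2)] in auto)
  also have "\<dots> = (\<Sum>i<?n - 1. of_bool (bd x i)) - 2"
    using assms by (simp add: sum_subtractf, linarith)
  finally have S: "(\<Sum>i<length x - 1. of_bool (bd (flip x j) i)::real) = \<dots>" .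
  have ne: "flip x j \<noteq> []" "x \<noteq> []" using assms by (auto simp: flip_def)
  show ?thesis using S nr_real[OF ne(1), unfolded fl_len] nr_real[OF ne(2)] by linarith
qed

lemma merge_W:
  assumes "Suc j < length x" "bd x j" "j \<noteq> 0" "bd x (j-1)"
  shows "Wsum (flip x j) \<le> Wsum x - 2"
proof -
  let ?n = "length x"
  have "Wsum (flip x j) \<le> (\<Sum>p<?n. wv x p - (if p = j then 2 else 0))"
    unfolding Wsum_def fl_len
  proof (rule sum_mono)
    fix p assume p: "p \<in> {..<?n}"
    show "wv (flip x j) p \<le> wv x p - (if p = j then 2 else 0)"
    proof (cases "p = j")
      case True
      have "\<not> unitp (flip x j) j" using not_unit_j[OF assms(1,2)] .
      moreover have "unitp x j" using assms by (simp add: unitp_def)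
      ultimately show ?thesis using True assms by (simp add: wv_def)
    next
      case False
      have "unitp (flip x j) p \<Longrightarrow> unitp x p"
        by (rule unit_imp[of "flip x j"]) (use p assms fl_bd[OF assms(1,2)] in \<open>auto split: if_splits\<close>)
      then show ?thesis using False wv_mono[of "flip x j" x p] assms by simp
    qed
  qed
  also have "\<dots> = Wsum x - 2" using assms by (simp add: sum_subtractf Wsum_def)
  finally show ?thesis .
qed

lemma same_nr:
  assumes "Suc j < length x" "bd x j" "j \<noteq> 0" "\<not> bd x (j-1)"
  shows "real (nr (flip x j)) = real (nr x)"
proof -
  let ?n = "length x"
  have "(\<Sum>i<?n - 1. of_bool (bd (flip x j) i)::real) = (\<Sum>i<?n - 1. of_bool (bd x i) - (if i = j then 1 else 0) + (if i = j - 1 then 1 else 0))"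
    by (rule sum.cong) (use assms fl_bd[OF assms(1,2)] in auto)
  also have "\<dots> = (\<Sum>i<?n - 1. of_bool (bd x i))"
    using assms by (simp add: sum_subtractf sum.distrib)
  finally have S: "(\<Sum>i<length x - 1. of_bool (bd (flip x j) i)::real) = \<dots>" .
  have ne: "flip x j \<noteq> []" "x \<noteq> []" using assms by (auto simp: flip_def)
  show ?thesis using S nr_real[OF ne(1), unfolded fl_len] nr_real[OF ne(2)] by linarith
qed

lemma same_W:
  assumes "Suc j < length x" "bd x j" "j \<noteq> 0" "\<not> bd x (j-1)"
  shows "Wsum (flip x j) \<le> Wsum x + 2"
proof -
  let ?n = "length x"
  have "Wsum (flip x j) \<le> (\<Sum>p<?n. wv x p + (if p = j - 1 then 2 else 0))"
    unfolding Wsum_def fl_len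
  proof (rule sum_mono)
    fix p assume p: "p \<in> {..<?n}"
    show "wv (flip x j) p \<le> wv x p + (if p = j - 1 then 2 else 0)"
    proof (cases "p = j - 1")
      case True
      then show ?thesis using wv_le[of "flip x j" p] wv_ge[of x p] assms by simp
    next
      case False
      show ?thesis
      proof (cases "p = j")
        case True
        have "\<not> unitp (flip x j) j" using not_unit_j[OF assms(1,2)] .
        then show ?thesis using True False assms wv_ge[of x p] by (simp add: wv_def)
      next
        case False2: False
        have "unitp (flip x j) p \<Longrightarrow> unitp x p"
          by (rule unit_imp[of "flip x j"]) (use p assms False False2 fl_bd[OF assms(1,2)] in \<open>auto split: if_splits\<close>)
        then show ?thesis using False wv_mono[of "flip x j" x p] assms by simp
      qed
    qed
  qed
  also have "\<dots> = Wsum x + 2" using assms by (simp add: sum.distrib Wsum_def)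
  finally show ?thesis .
qed



lemma nb_gen:
  assumes "y \<noteq> []" "real (num_runs y) = R'" "Nv y \<le> M"
  shows "z_sge y \<ge> 1/R' - M / P R'"
proof -
  have R1: "R' \<ge> 1" using z_lb(3)[OF assms(1)] assms(2) by simp
  have Pp: "P R' > 0" unfolding P_def using R1 by simp
  have "Nv y / P R' \<le> M / P R'" using assms(3) Pp by (simp add: divide_right_mono)
  then show ?thesis using z_lb(1)[OF assms(1)] assms(2) by simp
qed

lemma ne_of_len: "Suc j < length x \<Longrightarrow> x \<noteq> []" by auto

lemma nb_first:
  assumes "Suc 0 < length x" "bd x 0"
  shows "z_sge (flip x 0) \<ge> 1/(real (num_runs x) - 1) - (Nv x - 1) / P (real (num_runs x) - 1)"
proof -
  have ne: "flip x 0 \<noteq> []" "x \<noteq> []" using assms by (auto simp: flip_def)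
  show ?thesis
  proof (rule nb_gen[OF ne(1)])
    show "real (num_runs (flip x 0)) = real (num_runs x) - 1"
      using first_nr[OF assms] num_runs_idx[OF ne(1)] num_runs_idx[OF ne(2)] by simp
    show "Nv (flip x 0) \<le> Nv x - 1"
      using first_W[OF assms] Nv_W[OF ne(1)] Nv_W[OF ne(2)] by simp
  qed
qed

lemma nb_merge:
  assumes "Suc j < length x" "bd x j" "j \<noteq> 0" "bd x (j-1)"
  shows "z_sge (flip x j) \<ge> 1/(real (num_runs x) - 2) - (Nv x - 2) / P (real (num_runs x) - 2)"
proof -
  have ne: "flip x j \<noteq> []" "x \<noteq> []" using assms by (auto simp: flip_def)
  show ?thesis
  proof (rule nb_gen[OF ne(1)])
    show "real (num_runs (flip x j)) = real (num_runs x) - 2"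
      using merge_nr[OF assms] num_runs_idx[OF ne(1)] num_runs_idx[OF ne(2)] by simp
    show "Nv (flip x j) \<le> Nv x - 2"
      using merge_W[OF assms] Nv_W[OF ne(1)] Nv_W[OF ne(2)] by simp
  qed
qed

lemma nb_same:
  assumes "Suc j < length x" "bd x j" "j \<noteq> 0" "\<not> bd x (j-1)"
  shows "z_sge (flip x j) \<ge> 1/(real (num_runs x)) - (Nv x + 2) / P (real (num_runs x))"
proof -
  have ne: "flip x j \<noteq> []" "x \<noteq> []" using assms by (auto simp: flip_def)
  show ?thesis
  proof (rule nb_gen[OF ne(1)])
    show "real (num_runs (flip x j)) = real (num_runs x)"
      using same_nr[OF assms] num_runs_idx[OF ne(1)] num_runs_idx[OF ne(2)] by simp
    show "Nv (flip x j) \<le> Nv x + 2"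
      using same_W[OF assms] Nv_W[OF ne(1)] Nv_W[OF ne(2)] by simp
  qed
qed

lemma strings_finite: "finite (strings n)"
proof -
  have "strings n = {xs. set xs \<subseteq> (UNIV::bool set) \<and> length xs = n}" by (auto simp: strings_def)
  then show ?thesis using finite_lists_length_eq[of "UNIV::bool set" n] by simp
qed

lemma flip_ne: "Suc j < length x \<Longrightarrow> bd x j \<Longrightarrow> flip x j \<noteq> x"
  unfolding flip_def bd_def by (metis length_list_update nth_list_update_eq Suc_lessD)

lemma flip_inj:
  assumes "Suc j < length x" "bd x j" "Suc k < length x" "bd x k" "flip x j = flip x k"
  shows "j = k"
proof (rule ccontr)
  assume "j \<noteq> k"
  then have "flip x k ! j = x ! j" using assms(1) by (simp add: flip_def)
  moreover have "flip x j ! j = x ! Suc j" using assms(1) by (simp add: flip_def)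
  ultimately show False using assms(2,5) by (simp add: bd_def)
qed

lemma row_sum_lb:
  assumes x: "x \<in> strings n"
  shows "(\<Sum>y\<in>strings n. of_bool (sge_channel n x y) * z_sge y)
          \<ge> z_sge x + (\<Sum>j<n-1. if bd x j then z_sge (flip x j) else 0)"
proof -
  have lx: "length x = n" using x by (simp add: strings_def)
  define Bd where "Bd = {j \<in> {..<n-1}. bd x j}"
  define S where "S = insert x (flip x ` Bd)"
  have zn: "\<And>y. y \<in> strings n \<Longrightarrow> z_sge y \<ge> 0 \<or> y = []"
    using z_lb(2) by blast
  have Sstr: "S \<subseteq> strings n" unfolding S_def Bd_def using x lx by (auto simp: strings_def)
  have Sch: "\<And>y. y \<in> S \<Longrightarrow> sge_channel n x y"
  proof -
    fix y assume "y \<in> S"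
    then consider "y = x" | j where "j < n - 1" "bd x j" "y = flip x j" unfolding S_def Bd_def by auto
    then show "sge_channel n x y"
    proof cases
      case 1 then show ?thesis by (simp add: sge_channel_def)
    next
      case (2 j)
      show ?thesis unfolding sge_channel_def
        using 2 lx by (intro disjI2 exI[of _ j]) (auto simp: flip_def nth_list_update)
    qed
  qed
  have fin: "finite (strings n)" by (rule strings_finite)
  have "(\<Sum>y\<in>S. of_bool (sge_channel n x y) * z_sge y) \<le> (\<Sum>y\<in>strings n. of_bool (sge_channel n x y) * z_sge y)"
  proof (rule sum_mono2[OF fin Sstr])
    fix y assume "y \<in> strings n - S"
    then show "0 \<le> of_bool (sge_channel n x y) * z_sge y"
      using zn[of y] by (cases "y = []") (auto simp: z_sge_def num_runs_def)
  qed
  moreover have "(\<Sum>y\<in>S. of_bool (sge_channel n x y) * z_sge y) = (\<Sum>y\<in>S. z_sge y)"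
    using Sch by simp
  moreover have "(\<Sum>y\<in>S. z_sge y) = z_sge x + (\<Sum>j\<in>Bd. z_sge (flip x j))"
  proof -
    have nin: "x \<notin> flip x ` Bd"
    proof
      assume "x \<in> flip x ` Bd"
      then obtain j where "j < n - 1" "bd x j" "x = flip x j" unfolding Bd_def by auto
      moreover have "Suc j < length x" using \<open>j < n - 1\<close> lx by linarith
      ultimately show False using flip_ne[of j x] by auto
    qed
    have inj: "inj_on (flip x) Bd" unfolding Bd_def inj_on_def using flip_inj lx by force
    have "(\<Sum>y\<in>S. z_sge y) = z_sge x + (\<Sum>y\<in>flip x ` Bd. z_sge y)"
      unfolding S_def using nin by (simp add: Bd_def)
    also have "(\<Sum>y\<in>flip x ` Bd. z_sge y) = (\<Sum>j\<in>Bd. z_sge (flip x j))"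
      using inj by (simp add: sum.reindex)
    finally show ?thesis .
  qed
  moreover have "(\<Sum>j\<in>Bd. z_sge (flip x j)) = (\<Sum>j<n-1. if bd x j then z_sge (flip x j) else 0)"
    unfolding Bd_def by (rule sum.inter_filter) simp
  ultimately show ?thesis by simp
qed



lemma row_ge1:
  assumes x: "x \<in> strings n" and n2: "n \<ge> 2"
  shows "1 \<le> (\<Sum>y\<in>strings n. of_bool (sge_channel n x y) * z_sge y)"
proof -
  have lx: "length x = n" using x by (simp add: strings_def)
  have xne: "x \<noteq> []" using lx n2 by auto
  define R where "R = real (num_runs x)"
  define N where "N = Nv x"
  define L1 where "L1 = 1/(R - 1) - (N - 1) / P (R - 1)"
  define L2 where "L2 = 1/(R - 2) - (N - 2) / P (R - 2)"
  define L3 where "L3 = 1/R - (N + 2) / P R"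
  define fe where "fe = (\<lambda>j. bd x j \<and> j = 0)"
  define fc where "fc = (\<lambda>j. bd x j \<and> j \<noteq> 0 \<and> bd x (j-1))"
  define fa where "fa = (\<lambda>j. bd x j \<and> j \<noteq> 0 \<and> \<not> bd x (j-1))"
  define E where "E = (\<Sum>j<n-1. of_bool (fe j) :: real)"
  define C where "C = (\<Sum>j<n-1. of_bool (fc j) :: real)"
  define A where "A = (\<Sum>j<n-1. of_bool (fa j) :: real)"
  have pt: "\<And>j. j < n - 1 \<Longrightarrow> of_bool (fe j) * L1 + of_bool (fc j) * L2 + of_bool (fa j) * L3
            \<le> (if bd x j then z_sge (flip x j) else 0)"
  proof -
    fix j assume j: "j < n - 1"
    then have sj: "Suc j < length x" using lx by linarith
    show "of_bool (fe j) * L1 + of_bool (fc j) * L2 + of_bool (fa j) * L3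
            \<le> (if bd x j then z_sge (flip x j) else 0)"
    proof (cases "bd x j")
      case False then show ?thesis unfolding fe_def fc_def fa_def by simp
    next
      case True
      show ?thesis
      proof (cases "j = 0")
        case True
        then show ?thesis using nb_first[of x] sj \<open>bd x j\<close>
          unfolding fe_def fc_def fa_def L1_def R_def N_def by simp
      next
        case j0: False
        show ?thesis
        proof (cases "bd x (j-1)")
          case True
          then show ?thesis using nb_merge[OF sj \<open>bd x j\<close> j0] j0 \<open>bd x j\<close>
            unfolding fe_def fc_def fa_def L2_def R_def N_def by simp
        next
          case False
          then show ?thesis using nb_same[OF sj \<open>bd x j\<close> j0] j0 \<open>bd x j\<close>
            unfolding fe_def fc_def fa_def L3_def R_def N_def by simp
        qed
      qed
    qed
  qed
  have sumnb: "E * L1 + C * L2 + A * L3 \<le> (\<Sum>j<n-1. if bd x j then z_sge (flip x j) else 0)"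
  proof -
    have "(\<Sum>j<n-1. of_bool (fe j) * L1 + of_bool (fc j) * L2 + of_bool (fa j) * L3)
          \<le> (\<Sum>j<n-1. if bd x j then z_sge (flip x j) else 0)"
      by (rule sum_mono) (use pt in auto)
    moreover have "(\<Sum>j<n-1. of_bool (fe j) * L1 + of_bool (fc j) * L2 + of_bool (fa j) * L3)
          = E * L1 + C * L2 + A * L3"
      unfolding E_def C_def A_def by (simp add: sum.distrib sum_distrib_right)
    ultimately show ?thesis by simp
  qed
  have zx: "z_sge x \<ge> 1/R - N / P R" using z_lb(1)[OF xne] unfolding R_def N_def .
  have Rsum: "R = 1 + A + C + E"
  proof -
    have "R = 1 + (\<Sum>j<n-1. of_bool (bd x j))"
      unfolding R_def num_runs_idx[OF xne] using nr_real[OF xne] lx by simp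
    also have "(\<Sum>j<n-1. of_bool (bd x j)) = (\<Sum>j<n-1. of_bool (fa j) + of_bool (fc j) + of_bool (fe j) :: real)"
      by (rule sum.cong) (auto simp: fa_def fc_def fe_def)
    finally show ?thesis unfolding A_def C_def E_def by (simp add: sum.distrib)
  qed
  have Nsum: "N = E + 2 * C - 2"
  proof -
    have n1: "n = Suc (n - 1)" using n2 by simp
    have "Wsum x = (\<Sum>p<n-1. wv x p) + wv x (n-1)"
      unfolding Wsum_def lx by (subst n1) simp
    also have "wv x (n-1) = 0" using n2 lx by (simp add: wv_def)
    also have "(\<Sum>p<n-1. wv x p) = (\<Sum>p<n-1. of_bool (fe p) + 2 * of_bool (fc p))"
    proof (rule sum.cong)
      fix p assume p: "p \<in> {..<n-1}"
      show "wv x p = of_bool (fe p) + 2 * of_bool (fc p)"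
        using p lx n2 unfolding wv_def fe_def fc_def unitp_def by auto
    qed simp
    finally have "Wsum x = E + 2 * C"
      unfolding E_def C_def by (simp add: sum.distrib sum_distrib_left)
    then show ?thesis unfolding N_def using Nv_W[OF xne] by simp
  qed
  have E1: "E \<le> 1"
  proof -
    have "E = (\<Sum>j<n-1. if j = 0 then of_bool (bd x 0) else 0)"
      unfolding E_def fe_def by (rule sum.cong) auto
    also have "\<dots> \<le> 1" by simp
    finally show ?thesis .
  qed
  have E0: "E \<ge> 0" and C0: "C \<ge> 0" and A0: "A \<ge> 0" unfolding E_def C_def A_def by (auto intro: sum_nonneg)
  have CR: "C > 0 \<Longrightarrow> R \<ge> 3"
  proof -
    assume "C > 0"
    then obtain j where j: "j < n - 1" "fc j" unfolding C_def
      by (metis (mono_tags, lifting) less_numeral_extra(3) of_bool_eq(1) sum.neutral lessThan_iff)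
    then have sj: "Suc j < length x" using lx by linarith
    have fne: "flip x j \<noteq> []" using sj by (auto simp: flip_def)
    have "real (nr (flip x j)) = real (nr x) - 2" using merge_nr[OF sj] j unfolding fc_def by simp
    moreover have "real (nr (flip x j)) \<ge> 1" unfolding nr_def by simp
    ultimately show "R \<ge> 3" unfolding R_def num_runs_idx[OF xne] by simp
  qed
  have fin: "1 \<le> (1/R - N/(R*(R+1)*(R+2))) + A*(1/R - (N+2)/(R*(R+1)*(R+2)))
            + C*(1/(R-2) - (N-2)/((R-2)*(R-1)*R)) + E*(1/(R-1) - (N-1)/((R-1)*R*(R+1)))"
    by (rule final_ineq[OF A0 C0 E0 E1 Rsum CR Nsum])
  have P1: "P R = R*(R+1)*(R+2)" and P2: "P (R-2) = (R-2)*(R-1)*R" and P3: "P (R-1) = (R-1)*R*(R+1)"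
    unfolding P_def by (simp_all add: algebra_simps)
  have "1 \<le> z_sge x + (E * L1 + C * L2 + A * L3)"
    using fin zx unfolding L1_def L2_def L3_def P1 P2 P3 by linarith
  also have "\<dots> \<le> z_sge x + (\<Sum>j<n-1. if bd x j then z_sge (flip x j) else 0)" using sumnb by simp
  also have "\<dots> \<le> (\<Sum>y\<in>strings n. of_bool (sge_channel n x y) * z_sge y)" by (rule row_sum_lb[OF x])
  finally show ?thesis .
qed



lemma z_single: "z_sge [b] = 2"
  by (simp add: z_sge_def num_runs_def num_unit_runs_def bR_def bL_def)

theorem theorem3:
  fixes n :: nat
  assumes "n \<ge> 1"
  shows "kappa_star_feasible (strings n) (strings n) (sge_channel n) z_sge"
  unfolding kappa_star_feasible_def
proof (intro conjI ballI)
  fix y assume "y \<in> strings n"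
  then have "y \<noteq> []" using assms by (auto simp: strings_def)
  then show "z_sge y \<ge> 0" by (rule z_lb(2))
next
  fix x assume x: "x \<in> strings n"
  show "1 \<le> (\<Sum>y\<in>strings n. of_bool (sge_channel n x y) * z_sge y)"
  proof (cases "n \<ge> 2")
    case True then show ?thesis using row_ge1[OF x] by simp
  next
    case False
    then have n1: "n = 1" using assms by simp
    then obtain b where b: "x = [b]" using x by (auto simp: strings_def length_Suc_conv)
    have "z_sge x \<le> (\<Sum>y\<in>strings n. of_bool (sge_channel n x y) * z_sge y)"
      using row_sum_lb[OF x] n1 by simp
    then show ?thesis using b z_single by simp
  qed
qed


end
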